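(* Let $f:\mathbb{R}^M\times\Theta\to\mathbb{R}^N$ (with $N\ge 1$) be a network whose first layer is linear, i.e. $f(\mathbf{x};\boldsymbol{\theta})=g(\mathbf{W}\mathbf{x};\bar{\boldsymbol{\theta}})$ with parameters $\boldsymbol{\theta}=(\mathbf{W},\bar{\boldsymbol{\theta}})$, $\mathbf{W}\in\mathbb{R}^{d\times M}$, and $g$ differentiable in its first argument and twice differentiable in the parameters. Let $(\mathbf{x}_i,\mathbf{y}_i)_{i=1}^n$ be training data with $\mathbf{x}_i\neq 0$, and let $\boldsymbol{\theta}^*$ be an exact interpolation solution, i.e. $f(\mathbf{x}_i;\boldsymbol{\theta}^* )=\mathbf{y}_i$ for all $i$, with first-layer weight $\mathbf{W}$. Then $$dV_{f(\boldsymbol{\theta}^* )}\le \frac{N^{-N/2}}{n}\sum_{i=1}^n\|J_f(\mathbf{x}_i)\|_F^N\le \frac{1}{n}\sqrt{\sum_{i=1}^n\frac{\|\mathbf{W}\|_2^{2N}}{\|\mathbf{x}_i\|_2^{2N}}}\left(\frac{n\,S(\boldsymbol{\theta}^* )}{N}\right)^{N/2}.$$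
   Context: The loss is the quadratic loss $L(\boldsymbol{\theta})=\frac1n\sum_{i=1}^n\frac12\|f(\mathbf{x}_i;\boldsymbol{\theta})-\mathbf{y}_i\|_2^2$, and the sharpness is $S(\boldsymbol{\theta})=\operatorname{Tr}(\nabla^2_{\boldsymbol{\theta}}L(\boldsymbol{\theta}))$. $J_f(\mathbf{x})\in\mathbb{R}^{N\times M}$ denotes the Jacobian of $\mathbf{x}\mapsto f(\mathbf{x};\boldsymbol{\theta}^* )$ at $\mathbf{x}$. The local volumetric ratio at $\mathbf{x}$ is $d\mathrm{vol}|_{f(\mathbf{x},\boldsymbol{\theta}^* )}=\sqrt{\det(J_f(\mathbf{x})J_f(\mathbf{x})^{T})}$ (the product of the singular values of $J_f(\mathbf{x})$), and the Local Volumetric Ratio (LVR) of the network is $dV_{f(\boldsymbol{\theta}^* )}=\frac1n\sum_{i=1}^n d\mathrm{vol}|_{f(\mathbf{x}_i,\boldsymbol{\theta}^* )}$. $\|\cdot\|_2$ is the Euclidean norm for vectors and spectral norm for matrices; $\|\cdot\|_F$ is the Frobenius norm. *)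

theory Defs
  imports "HOL-Analysis.Analysis"
begin

definition net :: "(real^'d \<Rightarrow> 'q \<Rightarrow> real^'N) \<Rightarrow> real^'m \<Rightarrow> (real^'m^'d) \<times> 'q \<Rightarrow> real^'N" where
  "net g x \<theta> = g (fst \<theta> *v x) (snd \<theta>)"

definition quad_loss :: "(real^'m \<Rightarrow> 'p \<Rightarrow> real^'N) \<Rightarrow> (nat \<Rightarrow> real^'m) \<Rightarrow> (nat \<Rightarrow> real^'N) \<Rightarrow> nat \<Rightarrow> 'p \<Rightarrow> real" where
  "quad_loss f xs ys n \<theta> = (1 / real n) * (\<Sum>i<n. (1/2) * (norm (f (xs i) \<theta> - ys i))\<^sup>2)"

definition hess_trace :: "('p::euclidean_space \<Rightarrow> real) \<Rightarrow> 'p \<Rightarrow> real" where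
  "hess_trace L \<theta> = (\<Sum>b\<in>Basis. deriv (\<lambda>s. deriv (\<lambda>t. L (\<theta> + t *\<^sub>R b)) s) 0)"

definition sharpness :: "(real^'m \<Rightarrow> 'p::euclidean_space \<Rightarrow> real^'N) \<Rightarrow> (nat \<Rightarrow> real^'m) \<Rightarrow> (nat \<Rightarrow> real^'N) \<Rightarrow> nat \<Rightarrow> 'p \<Rightarrow> real" where
  "sharpness f xs ys n \<theta> = hess_trace (quad_loss f xs ys n) \<theta>"

definition input_jac :: "(real^'m \<Rightarrow> 'p \<Rightarrow> real^'N) \<Rightarrow> 'p \<Rightarrow> real^'m \<Rightarrow> real^'m^'N" where
  "input_jac f \<theta> x = jacobian (\<lambda>z. f z \<theta>) (at x)"

definition local_vol :: "real^'m^'N \<Rightarrow> real" where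
  "local_vol J = sqrt (det (J ** transpose J))"

definition LVR :: "(real^'m \<Rightarrow> 'p \<Rightarrow> real^'N) \<Rightarrow> 'p \<Rightarrow> (nat \<Rightarrow> real^'m) \<Rightarrow> nat \<Rightarrow> real" where
  "LVR f \<theta> xs n = (1 / real n) * (\<Sum>i<n. local_vol (input_jac f \<theta> (xs i)))"

definition frob_norm :: "real^'m^'N \<Rightarrow> real" where
  "frob_norm A = sqrt (\<Sum>i\<in>UNIV. \<Sum>j\<in>UNIV. (A $ i $ j)\<^sup>2)"

definition spec_norm :: "real^'m^'d \<Rightarrow> real" where
  "spec_norm W = onorm (\<lambda>x. W *v x)"

end

theory Submission
  imports Defs
begin

lemma gram_shift:
  fixes a b :: "'n::finite \<Rightarrow> real^'m"
  assumes y: "y \<in> span {a j | j. j \<noteq> k}"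
  shows "det (\<chi> i j. (a(k := a k - y)) i \<bullet> b j) = det (\<chi> i j. a i \<bullet> b j)"
proof -
  define G where "G = (\<chi> i j. a i \<bullet> b j)"
  define \<phi> where "\<phi> = (\<lambda>v::real^'m. \<chi> j. v \<bullet> b j)"
  have lin: "linear \<phi>" unfolding \<phi>_def
    by (auto simp: linear_iff vec_eq_iff inner_add_left)
  have rowG: "row j G = \<phi> (a j)" for j
    by (simp add: row_def G_def \<phi>_def vec_eq_iff)
  have "\<phi> (-y) \<in> span (\<phi> ` {a j | j. j \<noteq> k})"
    using span_linear_image[OF lin] y span_neg by blast
  moreover have "\<phi> ` {a j | j. j \<noteq> k} = {row j G | j. j \<noteq> k}"
    using rowG by auto
  ultimately have x: "\<phi> (-y) \<in> vec.span {row j G | j. j \<noteq> k}"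
    by (simp add: span_vec_eq)
  have "(\<chi> i j. (a(k := a k - y)) i \<bullet> b j) = (\<chi> i. if i = k then row k G + \<phi> (-y) else row i G)"
    by (simp add: vec_eq_iff rowG \<phi>_def inner_diff_left)
  then show ?thesis using det_row_span[OF x] by (simp add: G_def)
qed


lemma gram_orth:
  fixes a :: "'n::finite \<Rightarrow> real^'m" and S :: "'n set"
  shows "\<exists>a'::'n \<Rightarrow> real^'m. det (\<chi> i j. a' i \<bullet> a' j) = det (\<chi> i j. a i \<bullet> a j) \<and> (\<forall>i. norm (a' i) \<le> norm (a i))
     \<and> (\<forall>i\<in>S. \<forall>j. j \<noteq> i \<longrightarrow> a' i \<bullet> a' j = 0)"
proof (induction S rule: infinite_finite_induct)
  case (infinite A)
  then show ?case by simp
next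
  case empty
  have "\<forall>i. norm (a i) \<le> norm (a i)" by simp
  then show ?case by blast
next
  case (insert k S)
  then obtain a' :: "'n \<Rightarrow> real^'m" where d: "det (\<chi> i j. a' i \<bullet> a' j) = det (\<chi> i j. a i \<bullet> a j)"
    and nr: "\<forall>i. norm (a' i) \<le> norm (a i)" and orth: "\<forall>i\<in>S. \<forall>j. j \<noteq> i \<longrightarrow> a' i \<bullet> a' j = 0"
    by blast
  obtain y z where y: "y \<in> span {a' j | j. j \<noteq> k}"
    and z: "\<And>w. w \<in> span {a' j | j. j \<noteq> k} \<Longrightarrow> orthogonal z w" and yz: "a' k = y + z"
    using orthogonal_subspace_decomp_exists[of "{a' j | j. j \<noteq> k}" "a' k"] by blast
  define a'' where "a'' = a'(k := a' k - y)"
  have "det (\<chi> i j. a'' i \<bullet> a'' j) = det (\<chi> i j. a' i \<bullet> a'' j)"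
    unfolding a''_def by (rule gram_shift[OF y])
  also have "\<dots> = det (transpose (\<chi> i j. a' i \<bullet> a'' j))" by simp
  also have "transpose (\<chi> i j. a' i \<bullet> a'' j) = (\<chi> i j. a'' i \<bullet> a' j)"
    by (simp add: transpose_def inner_commute)
  also have "det (\<chi> i j. a'' i \<bullet> a' j) = det (\<chi> i j. a' i \<bullet> a' j)"
    unfolding a''_def by (rule gram_shift[OF y])
  finally have d2: "det (\<chi> i j. a'' i \<bullet> a'' j) = det (\<chi> i j. a i \<bullet> a j)" using d by simp
  have zk: "a'' k = z" using yz by (simp add: a''_def)
  have yzo: "y \<bullet> z = 0" using z[OF y] by (simp add: orthogonal_def inner_commute)
  have "norm (a' k) ^ 2 = norm y ^ 2 + norm z ^ 2"
    using yz yzo by (simp add: norm_add_Pythagorean orthogonal_def)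
  then have "norm z ^ 2 \<le> norm (a' k) ^ 2" by simp
  then have "norm z \<le> norm (a' k)" by (rule power2_le_imp_le) simp
  then have nr2: "\<forall>i. norm (a'' i) \<le> norm (a i)"
    using nr zk unfolding a''_def by (smt (verit) fun_upd_apply)
  have zo: "z \<bullet> a' j = 0" if "j \<noteq> k" for j
  proof -
    have "a' j \<in> span {a' j | j. j \<noteq> k}" by (rule span_base) (use that in blast)
    then show ?thesis using z[of "a' j"] by (simp add: orthogonal_def)
  qed
  have orth2: "\<forall>i\<in>insert k S. \<forall>j. j \<noteq> i \<longrightarrow> a'' i \<bullet> a'' j = 0"
  proof (intro ballI allI impI)
    fix i j assume i: "i \<in> insert k S" and ij: "j \<noteq> i"
    show "a'' i \<bullet> a'' j = 0"
    proof (cases "i = k")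
      case True
      then show ?thesis using zk zo ij by (simp add: a''_def)
    next
      case False
      then have iS: "i \<in> S" using i by simp
      show ?thesis
      proof (cases "j = k")
        case True
        then show ?thesis using zk zo[of i] False by (simp add: a''_def inner_commute)
      next
        case False
        then show ?thesis using orth iS ij \<open>i \<noteq> k\<close> by (simp add: a''_def)
      qed
    qed
  qed
  show ?case using d2 nr2 orth2 by blast
qed

lemma gram_hadamard:
  fixes a :: "'n::finite \<Rightarrow> real^'m"
  shows "det (\<chi> i j. a i \<bullet> a j) \<le> (\<Prod>i\<in>UNIV. norm (a i) ^ 2)"
proof -
  obtain a' :: "'n \<Rightarrow> real^'m" where d: "det (\<chi> i j. a' i \<bullet> a' j) = det (\<chi> i j. a i \<bullet> a j)"
    and nr: "\<forall>i. norm (a' i) \<le> norm (a i)" and orth: "\<forall>i\<in>UNIV. \<forall>j. j \<noteq> i \<longrightarrow> a' i \<bullet> a' j = 0"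
    using gram_orth[of a UNIV] by blast
  have "det (\<chi> i j. a' i \<bullet> a' j) = (\<Prod>i\<in>UNIV. a' i \<bullet> a' i)"
    by (rule det_diagonal[of "\<chi> i j. a' i \<bullet> a' j", simplified]) (use orth in auto)
  also have "\<dots> = (\<Prod>i\<in>UNIV. norm (a' i) ^ 2)" by (simp add: power2_norm_eq_inner)
  also have "\<dots> \<le> (\<Prod>i\<in>UNIV. norm (a i) ^ 2)"
    by (rule prod_mono) (use nr in \<open>auto intro: power_mono\<close>)
  finally show ?thesis using d by simp
qed


lemma amgm:
  fixes t :: "'n::finite \<Rightarrow> real"
  assumes nn: "\<And>i. t i \<ge> 0"
  shows "(\<Prod>i\<in>UNIV. t i) \<le> ((\<Sum>i\<in>UNIV. t i) / real CARD('n)) ^ CARD('n)"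
proof -
  define m where "m = (\<Sum>i\<in>UNIV. t i) / real CARD('n)"
  have m0: "m \<ge> 0" unfolding m_def by (simp add: nn sum_nonneg)
  show ?thesis
  proof (cases "m = 0")
    case True
    then have "(\<Sum>i\<in>UNIV. t i) = 0" by (simp add: m_def)
    then have "\<forall>i. t i = 0" using sum_nonneg_eq_0_iff[of UNIV t] nn by simp
    then show ?thesis using True by simp
  next
    case False
    then have mp: "m > 0" using m0 by simp
    have "(\<Prod>i\<in>UNIV. t i / m) \<le> (\<Prod>i\<in>UNIV. exp (t i / m - 1))"
    proof (rule prod_mono)
      fix i :: 'n
      show "0 \<le> t i / m \<and> t i / m \<le> exp (t i / m - 1)"
        using nn[of i] mp exp_ge_add_one_self[of "t i / m - 1"] by simp
    qed
    also have "\<dots> = exp (\<Sum>i\<in>UNIV. t i / m - 1)" by (simp add: exp_sum)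
    also have "(\<Sum>i\<in>UNIV. t i / m - 1) = (\<Sum>i\<in>UNIV. t i) / m - real CARD('n)"
      by (simp add: sum_subtractf sum_divide_distrib)
    also have "\<dots> = 0"
    proof -
      have "sum t UNIV \<noteq> 0" using mp by (auto simp: m_def)
      then show ?thesis by (simp add: m_def)
    qed
    finally have "(\<Prod>i\<in>UNIV. t i) / m ^ CARD('n) \<le> 1"
      by (simp add: prod_dividef)
    then show ?thesis using mp by (simp add: m_def[symmetric] divide_le_eq)
  qed
qed

lemma npow_eq:
  fixes N :: nat assumes "N > 0"
  shows "real N powr (- real N / 2) = 1 / sqrt (real N ^ N)"
proof -
  have p: "real N > 0" using assms by simp
  have a: "sqrt (real N ^ N) = (real N ^ N) powr (1/2)"
    by (rule powr_half_sqrt[symmetric]) simp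
  have b: "real N ^ N = real N powr real N" by (rule powr_realpow[symmetric]) (rule p)
  have c: "(real N powr real N) powr (1/2) = real N powr (real N / 2)"
    unfolding powr_powr by (simp add: field_simps)
  have d: "sqrt (real N ^ N) = (real N powr real N) powr (1/2)"
    by (subst b[symmetric]) (rule a)
  have e: "sqrt (real N ^ N) = real N powr (real N / 2)" using d c by (rule trans)
  have f: "real N powr (- real N / 2) = inverse (real N powr (real N / 2))"
    using powr_minus[of "real N" "real N / 2"] by (simp only: minus_divide_left)
  show ?thesis unfolding f e by (simp only: inverse_eq_divide)
qed

lemma local_vol_bound:
  fixes J :: "real^'m^'N"
  shows "local_vol J \<le> real CARD('N) powr (- real CARD('N) / 2) * frob_norm J ^ CARD('N)"
proof -
  let ?N = "CARD('N)"
  have fn0: "frob_norm J \<ge> 0" unfolding frob_norm_def by (simp add: sum_nonneg)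
  have JJ: "J ** transpose J = (\<chi> i j. row i J \<bullet> row j J)"
    by (simp add: matrix_matrix_mult_def transpose_def row_def inner_vec_def vec_eq_iff)
  have nr: "norm (row i J) ^ 2 = (\<Sum>j\<in>UNIV. (J $ i $ j)\<^sup>2)" for i
    unfolding power2_norm_eq_inner inner_vec_def row_def by (simp add: power2_eq_square)
  have F2: "frob_norm J ^ 2 = (\<Sum>i\<in>UNIV. norm (row i J) ^ 2)"
    unfolding frob_norm_def nr by (simp add: sum_nonneg)
  have "det (J ** transpose J) \<le> (\<Prod>i\<in>UNIV. norm (row i J) ^ 2)"
    unfolding JJ by (rule gram_hadamard)
  also have "\<dots> \<le> ((\<Sum>i\<in>UNIV. norm (row i J) ^ 2) / real ?N) ^ ?N"
    by (rule amgm) simp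
  also have "\<dots> = (frob_norm J ^ ?N) ^ 2 / real ?N ^ ?N"
    unfolding F2[symmetric] power_divide power_mult[symmetric] by (simp add: mult.commute)
  finally have "local_vol J \<le> sqrt ((frob_norm J ^ ?N) ^ 2 / real ?N ^ ?N)"
    unfolding local_vol_def by simp
  also have "\<dots> = frob_norm J ^ ?N / sqrt (real ?N ^ ?N)"
    unfolding real_sqrt_divide using fn0 by simp
  also have "\<dots> = real ?N powr (- real ?N / 2) * frob_norm J ^ ?N"
  proof -
    have e: "real ?N powr (- real ?N / 2) = 1 / sqrt (real ?N ^ ?N)" by (rule npow_eq) simp
    show ?thesis unfolding e by simp
  qed
  finally show ?thesis .
qed



lemma norm_sq_vec: "norm (v::real^'n) ^ 2 = (\<Sum>j\<in>UNIV. (v $ j)\<^sup>2)"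
  unfolding power2_norm_eq_inner inner_vec_def by (simp add: power2_eq_square)

lemma frob_sq: "frob_norm (A::real^'m^'N) ^ 2 = (\<Sum>i\<in>UNIV. \<Sum>j\<in>UNIV. (A $ i $ j)\<^sup>2)"
  unfolding frob_norm_def by (simp add: sum_nonneg)

lemma frob_nonneg: "frob_norm A \<ge> 0"
  unfolding frob_norm_def by (simp add: sum_nonneg)

lemma spec_nonneg: "spec_norm W \<ge> 0"
  unfolding spec_norm_def by (rule onorm_pos_le) simp

lemma spec_bound: "norm (W *v x) \<le> spec_norm W * norm x"
  unfolding spec_norm_def by (rule onorm) simp

lemma transpose_bound:
  fixes W :: "real^'m^'d"
  shows "norm (transpose W *v v) \<le> spec_norm W * norm v"
proof -
  let ?u = "transpose W *v v"
  have "norm ?u ^ 2 = ?u \<bullet> ?u" by (simp add: power2_norm_eq_inner)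
  also have "\<dots> = v \<bullet> (W *v ?u)" by (simp add: dot_lmul_matrix)
  also have "\<dots> \<le> norm v * norm (W *v ?u)" by (rule norm_cauchy_schwarz)
  also have "\<dots> \<le> norm v * (spec_norm W * norm ?u)"
    by (rule mult_left_mono[OF spec_bound]) simp
  finally have "norm ?u * norm ?u \<le> (spec_norm W * norm v) * norm ?u"
    by (simp add: power2_eq_square algebra_simps)
  then show ?thesis
  proof (cases "norm ?u = 0")
    case True
    then show ?thesis using spec_nonneg[of W] by simp
  next
    case False
    then have "norm ?u > 0" by simp
    then show ?thesis using \<open>norm ?u * norm ?u \<le> (spec_norm W * norm v) * norm ?u\<close>
      by (simp add: mult_le_cancel_right)
  qed
qed

lemma frob_mult_bound:
  fixes A :: "real^'d^'N" and W :: "real^'m^'d"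
  shows "frob_norm (A ** W) \<le> frob_norm A * spec_norm W"
proof -
  have r: "(\<Sum>j\<in>UNIV. ((A ** W) $ i $ j)\<^sup>2) = norm (transpose W *v (A $ i)) ^ 2" for i
    unfolding norm_sq_vec
    by (simp add: matrix_matrix_mult_def matrix_vector_mult_def transpose_def mult.commute)
  have r2: "(\<Sum>j\<in>UNIV. (A $ i $ j)\<^sup>2) = norm (A $ i) ^ 2" for i
    unfolding norm_sq_vec ..
  have "frob_norm (A ** W) ^ 2 = (\<Sum>i\<in>UNIV. norm (transpose W *v (A $ i)) ^ 2)"
    unfolding frob_sq r ..
  also have "\<dots> \<le> (\<Sum>i\<in>UNIV. (spec_norm W * norm (A $ i)) ^ 2)"
    by (rule sum_mono, rule power_mono[OF transpose_bound]) simp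
  also have "\<dots> = (frob_norm A * spec_norm W) ^ 2"
    unfolding power_mult_distrib frob_sq r2 by (simp add: sum_distrib_left mult_ac)
  finally show ?thesis
    by (rule power2_le_imp_le) (simp add: frob_nonneg spec_nonneg)
qed

lemma sum_Basis_vec:
  "(\<Sum>u\<in>(Basis::('a::euclidean_space^'n) set). F u) = (\<Sum>i\<in>UNIV. \<Sum>v\<in>Basis. F (axis i v))"
proof -
  have "(\<Sum>u\<in>(\<Union>i. \<Union>v\<in>(Basis::'a set). {axis i v :: 'a^'n}). F u) = (\<Sum>i\<in>UNIV. \<Sum>u\<in>(\<Union>v\<in>Basis. {axis i v}). F u)"
    by (rule sum.UNION_disjoint) (auto simp: axis_eq_axis)
  also have "\<dots> = (\<Sum>i\<in>UNIV. \<Sum>v\<in>Basis. F (axis i v))"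
  proof (rule sum.cong[OF refl])
    fix i :: 'n
    have "(\<Union>v\<in>(Basis::'a set). {axis i v :: 'a^'n}) = axis i ` Basis" by auto
    moreover have "inj_on (axis i :: 'a \<Rightarrow> 'a^'n) Basis"
      by (auto simp: inj_on_def axis_eq_axis)
    ultimately show "(\<Sum>u\<in>(\<Union>v\<in>Basis. {axis i v}). F u) = (\<Sum>v\<in>Basis. F (axis i v))"
      by (simp add: sum.reindex)
  qed
  finally show ?thesis by (simp add: Basis_vec_def)
qed

lemma sum_Basis_mat:
  "(\<Sum>u\<in>(Basis::(real^'m^'d) set). F u) = (\<Sum>i\<in>UNIV. \<Sum>j\<in>UNIV. F (axis i (axis j 1)))"
  unfolding sum_Basis_vec by simp

lemma if01: "(if P then 1 else 0) * (y::real) = (if P then y else 0)"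
  by simp

lemma basis_sum_jac:
  fixes A :: "real^'d^'N" and x :: "real^'m"
  shows "(\<Sum>u\<in>(Basis::(real^'m^'d) set). norm (A *v (u *v x)) ^ 2) = norm x ^ 2 * frob_norm A ^ 2"
proof -
  have e0: "axis i (axis j 1) *v x = x $ j *\<^sub>R axis i (1::real)" for i :: 'd and j :: 'm
  proof -
    have ax: "(axis i (axis j (1::real)) :: real^'m^'d) $ k $ l = (if k = i \<and> l = j then 1 else 0)" for k l
      by (simp add: axis_def)
    have "(axis i (axis j 1) *v x) $ k = (x $ j *\<^sub>R axis i (1::real)) $ k" for k
      by (cases "k = i") (simp_all add: matrix_vector_mult_def ax axis_def if01)
    then show ?thesis by (simp add: vec_eq_iff)
  qed
  have e: "A *v (axis i (axis j 1) *v x) = x $ j *\<^sub>R (\<chi> r. A $ r $ i)" for i j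
    unfolding e0 matrix_vector_mult_scaleR matrix_vector_mult_basis column_def ..
  have "(\<Sum>i\<in>UNIV. \<Sum>j\<in>UNIV. norm (A *v (axis i (axis j 1) *v x)) ^ 2)
      = (\<Sum>i\<in>UNIV. \<Sum>j\<in>UNIV. (x $ j)\<^sup>2 * (\<Sum>r\<in>UNIV. (A $ r $ i)\<^sup>2))"
    unfolding e norm_sq_vec by (simp add: power_mult_distrib sum_distrib_left)
  also have "\<dots> = (\<Sum>i\<in>UNIV. (\<Sum>j\<in>UNIV. (x $ j)\<^sup>2) * (\<Sum>r\<in>UNIV. (A $ r $ i)\<^sup>2))"
    by (rule sum.cong[OF refl]) (rule sum_distrib_right[symmetric])
  also have "\<dots> = (\<Sum>j\<in>UNIV. (x $ j)\<^sup>2) * (\<Sum>i\<in>UNIV. \<Sum>r\<in>UNIV. (A $ r $ i)\<^sup>2)"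
    by (rule sum_distrib_left[symmetric])
  also have "\<dots> = norm x ^ 2 * frob_norm A ^ 2"
    unfolding norm_sq_vec frob_sq by (subst sum.swap) simp
  finally show ?thesis unfolding sum_Basis_mat .
qed



lemma first_deriv:
  fixes F :: "'p::euclidean_space \<Rightarrow> 'b::real_inner" and D :: "'p \<Rightarrow> ('p \<Rightarrow>\<^sub>L 'b)"
  assumes Fd: "\<And>\<theta>. (F has_derivative blinfun_apply (D \<theta>)) (at \<theta>)"
  shows "((\<lambda>t. (1/2) * (norm (F (\<theta>0 + t *\<^sub>R b) - y))\<^sup>2) has_real_derivative
          ((F (\<theta>0 + s *\<^sub>R b) - y) \<bullet> blinfun_apply (D (\<theta>0 + s *\<^sub>R b)) b)) (at s)"
proof -
  have pd: "((\<lambda>t. \<theta>0 + t *\<^sub>R b) has_derivative (\<lambda>t. t *\<^sub>R b)) (at s)"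
    by (auto intro!: derivative_eq_intros)
  have ud: "((\<lambda>t. F (\<theta>0 + t *\<^sub>R b) - y) has_derivative
        (\<lambda>t. t *\<^sub>R blinfun_apply (D (\<theta>0 + s *\<^sub>R b)) b)) (at s)"
    using has_derivative_diff[OF has_derivative_compose[OF pd Fd] has_derivative_const[of y]]
    by (simp add: blinfun.scaleR_right)
  let ?u = "F (\<theta>0 + s *\<^sub>R b) - y" and ?v = "blinfun_apply (D (\<theta>0 + s *\<^sub>R b)) b"
  have "((\<lambda>t. (1/2) * ((F (\<theta>0 + t *\<^sub>R b) - y) \<bullet> (F (\<theta>0 + t *\<^sub>R b) - y))) has_derivative
        (\<lambda>h. (1/2) * (?u \<bullet> (h *\<^sub>R ?v) + (h *\<^sub>R ?v) \<bullet> ?u))) (at s)"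
    by (rule has_derivative_mult_right, rule has_derivative_inner[OF ud ud])
  then have "((\<lambda>t. (1/2) * ((F (\<theta>0 + t *\<^sub>R b) - y) \<bullet> (F (\<theta>0 + t *\<^sub>R b) - y))) has_derivative
        (\<lambda>h. h * (?u \<bullet> ?v))) (at s)"
    by (rule has_derivative_eq_rhs) (auto simp: inner_commute algebra_simps fun_eq_iff)
  then show ?thesis unfolding has_field_derivative_def power2_norm_eq_inner
    by (rule has_derivative_eq_rhs) (simp add: fun_eq_iff)
qed

lemma second_deriv:
  fixes F :: "'p::euclidean_space \<Rightarrow> 'b::real_inner" and D :: "'p \<Rightarrow> ('p \<Rightarrow>\<^sub>L 'b)"
  assumes Fd: "\<And>\<theta>. (F has_derivative blinfun_apply (D \<theta>)) (at \<theta>)"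
    and Dd: "D differentiable (at \<theta>0)" and y: "F \<theta>0 = y"
  shows "((\<lambda>s. (F (\<theta>0 + s *\<^sub>R b) - y) \<bullet> blinfun_apply (D (\<theta>0 + s *\<^sub>R b)) b) has_real_derivative
          (norm (blinfun_apply (D \<theta>0) b))\<^sup>2) (at 0)"
proof -
  have pd: "((\<lambda>t. \<theta>0 + t *\<^sub>R b) has_derivative (\<lambda>t. t *\<^sub>R b)) (at 0)"
    by (auto intro!: derivative_eq_intros)
  have ud: "((\<lambda>t. F (\<theta>0 + t *\<^sub>R b) - y) has_derivative
        (\<lambda>t. t *\<^sub>R blinfun_apply (D \<theta>0) b)) (at 0)"
    using has_derivative_diff[OF has_derivative_compose[OF pd Fd] has_derivative_const[of y]]
    by (simp add: blinfun.scaleR_right)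
  obtain D' where D': "(D has_derivative D') (at \<theta>0)" using Dd by (auto simp: differentiable_def)
  have D'': "(D has_derivative D') (at (\<theta>0 + 0 *\<^sub>R b))" using D' by simp
  have vd: "((\<lambda>t. blinfun_apply (D (\<theta>0 + t *\<^sub>R b)) b) has_derivative
        (\<lambda>t. blinfun_apply (D' (t *\<^sub>R b)) b)) (at 0)"
    using bounded_linear.has_derivative[OF bounded_bilinear.bounded_linear_left[OF bounded_bilinear_blinfun_apply]
        has_derivative_compose[OF pd D''], of b]
    by simp
  have "((\<lambda>s. (F (\<theta>0 + s *\<^sub>R b) - y) \<bullet> blinfun_apply (D (\<theta>0 + s *\<^sub>R b)) b) has_derivative
       (\<lambda>h. (F (\<theta>0 + 0 *\<^sub>R b) - y) \<bullet> blinfun_apply (D' (h *\<^sub>R b)) b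
            + (h *\<^sub>R blinfun_apply (D \<theta>0) b) \<bullet> blinfun_apply (D (\<theta>0 + 0 *\<^sub>R b)) b)) (at 0)"
    by (rule has_derivative_inner[OF ud vd])
  then have "((\<lambda>s. (F (\<theta>0 + s *\<^sub>R b) - y) \<bullet> blinfun_apply (D (\<theta>0 + s *\<^sub>R b)) b) has_derivative
       (\<lambda>h. h * (norm (blinfun_apply (D \<theta>0) b))\<^sup>2)) (at 0)"
    by (rule has_derivative_eq_rhs) (simp add: y fun_eq_iff power2_norm_eq_inner)
  then show ?thesis unfolding has_field_derivative_def
    by (rule has_derivative_eq_rhs) (simp add: fun_eq_iff)
qed



lemma hess_dir:
  fixes f :: "real^'m \<Rightarrow> 'p::euclidean_space \<Rightarrow> real^'N" and D :: "nat \<Rightarrow> 'p \<Rightarrow> ('p \<Rightarrow>\<^sub>L (real^'N))"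
  assumes Fd: "\<And>i \<theta>. i < n \<Longrightarrow> ((\<lambda>\<theta>. f (xs i) \<theta>) has_derivative blinfun_apply (D i \<theta>)) (at \<theta>)"
    and Dd: "\<And>i. i < n \<Longrightarrow> D i differentiable (at \<theta>0)"
    and y: "\<And>i. i < n \<Longrightarrow> f (xs i) \<theta>0 = ys i"
  shows "deriv (\<lambda>s. deriv (\<lambda>t. quad_loss f xs ys n (\<theta>0 + t *\<^sub>R b)) s) 0
       = (1 / real n) * (\<Sum>i<n. (norm (blinfun_apply (D i \<theta>0) b))\<^sup>2)"
proof -
  define \<phi> where "\<phi> = (\<lambda>s. (1 / real n) * (\<Sum>i<n. (f (xs i) (\<theta>0 + s *\<^sub>R b) - ys i) \<bullet> blinfun_apply (D i (\<theta>0 + s *\<^sub>R b)) b))"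
  have h1: "((\<lambda>t. quad_loss f xs ys n (\<theta>0 + t *\<^sub>R b)) has_real_derivative \<phi> s) (at s)" for s
    unfolding quad_loss_def \<phi>_def
    by (rule DERIV_cmult, rule DERIV_sum, rule first_deriv[OF Fd]) simp
  have e: "(\<lambda>s. deriv (\<lambda>t. quad_loss f xs ys n (\<theta>0 + t *\<^sub>R b)) s) = \<phi>"
    using h1 DERIV_imp_deriv by (auto simp: fun_eq_iff)
  have "(\<phi> has_real_derivative (1 / real n) * (\<Sum>i<n. (norm (blinfun_apply (D i \<theta>0) b))\<^sup>2)) (at 0)"
    unfolding \<phi>_def
    by (rule DERIV_cmult, rule DERIV_sum, rule second_deriv[OF Fd Dd y]) simp_all
  then show ?thesis unfolding e by (rule DERIV_imp_deriv)
qed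



lemma sum_pow_le_pow_sum:
  fixes s :: "nat \<Rightarrow> real"
  assumes nn: "\<And>i. i \<in> I \<Longrightarrow> s i \<ge> 0" and N: "N > 0" and fin: "finite I"
  shows "(\<Sum>i\<in>I. s i ^ N) \<le> (\<Sum>i\<in>I. s i) ^ N"
proof -
  let ?S = "\<Sum>i\<in>I. s i"
  have S0: "?S \<ge> 0" using nn by (simp add: sum_nonneg)
  have "s i ^ N \<le> s i * ?S ^ (N - 1)" if i: "i \<in> I" for i
  proof -
    have "s i \<le> ?S" using member_le_sum[of i I s] nn i fin by simp
    then have "s i ^ (N - 1) \<le> ?S ^ (N - 1)" using nn[OF i] by (simp add: power_mono)
    then have "s i * s i ^ (N - 1) \<le> s i * ?S ^ (N - 1)" using nn[OF i] by (simp add: mult_left_mono)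
    moreover have "s i * s i ^ (N - 1) = s i ^ N" using N by (simp add: power_eq_if)
    ultimately show ?thesis by simp
  qed
  then have "(\<Sum>i\<in>I. s i ^ N) \<le> (\<Sum>i\<in>I. s i * ?S ^ (N - 1))" by (rule sum_mono)
  also have "\<dots> = ?S * ?S ^ (N - 1)" by (simp add: sum_distrib_right)
  also have "\<dots> = ?S ^ N" using N by (simp add: power_eq_if)
  finally show ?thesis .
qed

lemma cs_sqrt:
  fixes a b :: "nat \<Rightarrow> real"
  shows "(\<Sum>i\<in>I. a i * b i) \<le> sqrt (\<Sum>i\<in>I. (a i)\<^sup>2) * sqrt (\<Sum>i\<in>I. (b i)\<^sup>2)"
proof -
  have "(\<Sum>i\<in>I. a i * b i) \<le> sqrt ((\<Sum>i\<in>I. a i * b i)\<^sup>2)" by simp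
  also have "\<dots> \<le> sqrt ((\<Sum>i\<in>I. (a i)\<^sup>2) * (\<Sum>i\<in>I. (b i)\<^sup>2))"
    by (rule real_sqrt_le_mono, rule Cauchy_Schwarz_ineq_sum)
  finally show ?thesis by (simp add: real_sqrt_mult)
qed

lemma combine:
  fixes F c s :: "nat \<Rightarrow> real"
  assumes F0: "\<And>i. i < n \<Longrightarrow> F i \<ge> 0" and c0: "\<And>i. i < n \<Longrightarrow> c i \<ge> 0"
    and s0: "\<And>i. i < n \<Longrightarrow> s i \<ge> 0" and Fcs: "\<And>i. i < n \<Longrightarrow> (F i)\<^sup>2 \<le> c i * s i"
    and T: "(\<Sum>i<n. s i) \<le> T" and N: "N > 0"
  shows "(\<Sum>i<n. F i ^ N) \<le> sqrt (\<Sum>i<n. c i ^ N) * sqrt (T ^ N)"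
proof -
  have "F i ^ N \<le> sqrt (c i ^ N) * sqrt (s i ^ N)" if i: "i < n" for i
  proof -
    have pe: "((F i)\<^sup>2) ^ N = (F i ^ N)\<^sup>2"
      by (simp only: power_mult[symmetric] mult.commute)
    have "F i ^ N = sqrt (((F i)\<^sup>2) ^ N)"
      unfolding pe real_sqrt_abs using F0[OF i] by simp
    also have "\<dots> \<le> sqrt ((c i * s i) ^ N)"
      by (rule real_sqrt_le_mono, rule power_mono[OF Fcs[OF i]]) simp
    also have "\<dots> = sqrt (c i ^ N) * sqrt (s i ^ N)" by (simp add: power_mult_distrib real_sqrt_mult)
    finally show ?thesis .
  qed
  then have "(\<Sum>i<n. F i ^ N) \<le> (\<Sum>i<n. sqrt (c i ^ N) * sqrt (s i ^ N))" by (intro sum_mono) simp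
  also have "\<dots> \<le> sqrt (\<Sum>i<n. (sqrt (c i ^ N))\<^sup>2) * sqrt (\<Sum>i<n. (sqrt (s i ^ N))\<^sup>2)"
    by (rule cs_sqrt)
  also have "(\<Sum>i<n. (sqrt (c i ^ N))\<^sup>2) = (\<Sum>i<n. c i ^ N)"
    by (rule sum.cong) (simp_all add: c0)
  also have "(\<Sum>i<n. (sqrt (s i ^ N))\<^sup>2) = (\<Sum>i<n. s i ^ N)"
    by (rule sum.cong) (simp_all add: s0)
  finally have L: "(\<Sum>i<n. F i ^ N) \<le> sqrt (\<Sum>i<n. c i ^ N) * sqrt (\<Sum>i<n. s i ^ N)" .
  have R: "sqrt (\<Sum>i<n. s i ^ N) \<le> sqrt (T ^ N)"
  proof -
    have "(\<Sum>i<n. s i ^ N) \<le> (\<Sum>i<n. s i) ^ N" by (rule sum_pow_le_pow_sum) (simp_all add: s0 N)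
    also have "\<dots> \<le> T ^ N" by (rule power_mono[OF T]) (rule sum_nonneg, simp add: s0)
    finally show ?thesis by simp
  qed
  have "sqrt (\<Sum>i<n. c i ^ N) * sqrt (\<Sum>i<n. s i ^ N) \<le> sqrt (\<Sum>i<n. c i ^ N) * sqrt (T ^ N)"
    by (rule mult_left_mono[OF R]) (simp, rule sum_nonneg, simp add: c0)
  with L show ?thesis by linarith
qed

lemma powr_half_nat:
  fixes x :: real assumes x: "x \<ge> 0" and N: "N > 0"
  shows "x powr (real N / 2) = sqrt (x ^ N)"
proof (cases "x = 0")
  case True then show ?thesis using N by simp
next
  case False
  then have p: "x > 0" using x by simp
  have a: "sqrt (x ^ N) = (x ^ N) powr (1/2)"
    by (rule powr_half_sqrt[symmetric]) (simp add: x)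
  have b: "x ^ N = x powr real N" by (rule powr_realpow[symmetric]) (rule p)
  have c: "(x powr real N) powr (1/2) = x powr (real N / 2)"
    unfolding powr_powr by (simp add: field_simps)
  have d: "sqrt (x ^ N) = (x powr real N) powr (1/2)"
    by (subst b[symmetric]) (rule a)
  show ?thesis using trans[OF d c] by (rule sym)
qed

theorem proposition1:
  fixes g :: "real^'d \<Rightarrow> 'q::euclidean_space \<Rightarrow> real^'N"
    and xs :: "nat \<Rightarrow> real^'m" and ys :: "nat \<Rightarrow> real^'N" and n :: nat
    and \<theta>s :: "(real^'m^'d) \<times> 'q"
  assumes diff_first: "\<And>z q. (\<lambda>z. g z q) differentiable (at z)"
    and twice_diff_params: "\<And>i. i < n \<Longrightarrow>
        \<exists>D :: (real^'m^'d) \<times> 'q \<Rightarrow> (((real^'m^'d) \<times> 'q) \<Rightarrow>\<^sub>L (real^'N)).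
           (\<forall>\<theta>. ((\<lambda>\<theta>. net g (xs i) \<theta>) has_derivative blinfun_apply (D \<theta>)) (at \<theta>))
         \<and> (\<forall>\<theta>. D differentiable (at \<theta>))"
    and nonzero: "\<And>i. i < n \<Longrightarrow> xs i \<noteq> 0"
    and interp: "\<And>i. i < n \<Longrightarrow> net g (xs i) \<theta>s = ys i"
  shows "LVR (net g) \<theta>s xs n
           \<le> real CARD('N) powr (- real CARD('N) / 2) / real n
              * (\<Sum>i<n. frob_norm (input_jac (net g) \<theta>s (xs i)) ^ CARD('N))
       \<and> real CARD('N) powr (- real CARD('N) / 2) / real n
              * (\<Sum>i<n. frob_norm (input_jac (net g) \<theta>s (xs i)) ^ CARD('N))
           \<le> (1 / real n)
              * sqrt (\<Sum>i<n. spec_norm (fst \<theta>s) ^ (2 * CARD('N)) / norm (xs i) ^ (2 * CARD('N)))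
              * (real n * sharpness (net g) xs ys n \<theta>s / real CARD('N)) powr (real CARD('N) / 2)"
proof -
  let ?N = "CARD('N)"
  define W where "W = fst \<theta>s"
  define q where "q = snd \<theta>s"
  have \<theta>s_eq: "\<theta>s = (W, q)" by (simp add: W_def q_def)
  have "\<forall>i. \<exists>Di. i < n \<longrightarrow> ((\<forall>\<theta>. ((\<lambda>\<theta>. net g (xs i) \<theta>) has_derivative blinfun_apply (Di \<theta>)) (at \<theta>))
         \<and> (\<forall>\<theta>. Di differentiable (at \<theta>)))"
    using twice_diff_params by blast
  then obtain D :: "nat \<Rightarrow> (real^'m^'d) \<times> 'q \<Rightarrow> (((real^'m^'d) \<times> 'q) \<Rightarrow>\<^sub>L (real^'N))"
    where D: "\<And>i. i < n \<Longrightarrow> (\<forall>\<theta>. ((\<lambda>\<theta>. net g (xs i) \<theta>) has_derivative blinfun_apply (D i \<theta>)) (at \<theta>))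
         \<and> (\<forall>\<theta>. D i differentiable (at \<theta>))"
    by metis
  define A where "A i = jacobian (\<lambda>z. g z q) (at (W *v xs i))" for i
  have gder: "((\<lambda>z. g z q) has_derivative (\<lambda>h. jacobian (\<lambda>z. g z q) (at z) *v h)) (at z)" for z
    using diff_first jacobian_works by blast
  have Wd: "((\<lambda>z. W *v z) has_derivative (\<lambda>h. W *v h)) (at x)" for x :: "real^'m"
    by (rule bounded_linear_imp_has_derivative) simp
  have Jf: "input_jac (net g) \<theta>s (xs i) = A i ** W" for i
  proof -
    have "((\<lambda>z. net g z \<theta>s) has_derivative (\<lambda>h. A i *v (W *v h))) (at (xs i))"
      unfolding net_def \<theta>s_eq fst_conv snd_conv A_def
      by (rule has_derivative_compose[OF Wd gder])
    then have "frechet_derivative (\<lambda>z. net g z \<theta>s) (at (xs i)) = (\<lambda>h. A i *v (W *v h))"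
      by (rule frechet_derivative_at[symmetric])
    then show ?thesis unfolding input_jac_def jacobian_def by (simp add: matrix_vector_mul_assoc)
  qed
  have dir: "blinfun_apply (D i \<theta>s) (u, 0) = A i *v (u *v xs i)" if i: "i < n" for i u
  proof -
    have p: "((\<lambda>t::real. \<theta>s + t *\<^sub>R (u, 0)) has_derivative (\<lambda>t. t *\<^sub>R (u, 0))) (at 0)"
      by (auto intro!: derivative_eq_intros)
    have Fd: "((\<lambda>\<theta>. net g (xs i) \<theta>) has_derivative blinfun_apply (D i \<theta>s)) (at (\<theta>s + 0 *\<^sub>R (u, 0)))"
    proof -
      have z: "\<theta>s + 0 *\<^sub>R (u, 0) = \<theta>s" by (cases \<theta>s) simp
      show ?thesis unfolding z using D[OF i] by blast
    qed
    have d1: "((\<lambda>t. net g (xs i) (\<theta>s + t *\<^sub>R (u, 0))) has_derivative (\<lambda>t. blinfun_apply (D i \<theta>s) (t *\<^sub>R (u, 0)))) (at 0)"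
      by (rule has_derivative_compose[OF p Fd])
    have e: "(\<lambda>t. net g (xs i) (\<theta>s + t *\<^sub>R (u, 0))) = (\<lambda>t. g (W *v xs i + t *\<^sub>R (u *v xs i)) q)"
      by (simp add: fun_eq_iff net_def \<theta>s_eq matrix_vector_mult_add_rdistrib scaleR_matrix_vector_assoc)
    have p2: "((\<lambda>t::real. W *v xs i + t *\<^sub>R (u *v xs i)) has_derivative (\<lambda>t. t *\<^sub>R (u *v xs i))) (at 0)"
      by (auto intro!: derivative_eq_intros)
    have gd: "((\<lambda>z. g z q) has_derivative (\<lambda>h. A i *v h)) (at (W *v xs i + 0 *\<^sub>R (u *v xs i)))"
      using gder[of "W *v xs i"] by (simp add: A_def)
    have d2: "((\<lambda>t. g (W *v xs i + t *\<^sub>R (u *v xs i)) q) has_derivative (\<lambda>t. A i *v (t *\<^sub>R (u *v xs i)))) (at 0)"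
      by (rule has_derivative_compose[OF p2 gd])
    have "(\<lambda>t. blinfun_apply (D i \<theta>s) (t *\<^sub>R (u, 0))) = (\<lambda>t. A i *v (t *\<^sub>R (u *v xs i)))"
      using has_derivative_unique[OF d1[unfolded e] d2] .
    then have "blinfun_apply (D i \<theta>s) (1 *\<^sub>R (u, 0)) = A i *v (1 *\<^sub>R (u *v xs i))"
      by (rule fun_cong)
    then show ?thesis by simp
  qed
  have hd: "deriv (\<lambda>s. deriv (\<lambda>t. quad_loss (net g) xs ys n (\<theta>s + t *\<^sub>R b)) s) 0
       = (1 / real n) * (\<Sum>i<n. (norm (blinfun_apply (D i \<theta>s) b))\<^sup>2)" for b
    by (rule hess_dir; use D interp in blast)
  define s where "s i = norm (xs i) ^ 2 * frob_norm (A i) ^ 2" for i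
  have Sge: "sharpness (net g) xs ys n \<theta>s \<ge> (1 / real n) * (\<Sum>i<n. s i)"
  proof -
    let ?f = "\<lambda>b. (1 / real n) * (\<Sum>i<n. (norm (blinfun_apply (D i \<theta>s) b))\<^sup>2)"
    have "sharpness (net g) xs ys n \<theta>s = (\<Sum>b\<in>Basis. ?f b)"
      unfolding sharpness_def hess_trace_def hd ..
    also have "(\<Sum>b\<in>(\<lambda>u. (u, 0)) ` (Basis :: (real^'m^'d) set). ?f b) \<le> (\<Sum>b\<in>Basis. ?f b)"
      by (rule sum_mono2) (auto simp: Basis_prod_def intro!: sum_nonneg mult_nonneg_nonneg divide_nonneg_nonneg)
    also have "(\<Sum>b\<in>(\<lambda>u. (u, 0)) ` (Basis :: (real^'m^'d) set). ?f b) = (\<Sum>u\<in>(Basis :: (real^'m^'d) set). ?f (u, 0))"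
      by (subst sum.reindex) (auto simp: inj_on_def)
    also have "\<dots> = (\<Sum>u\<in>(Basis :: (real^'m^'d) set). (1 / real n) * (\<Sum>i<n. (norm (A i *v (u *v xs i)))\<^sup>2))"
      by (auto intro!: sum.cong simp: dir)
    also have "\<dots> = (1 / real n) * (\<Sum>u\<in>(Basis :: (real^'m^'d) set). \<Sum>i<n. (norm (A i *v (u *v xs i)))\<^sup>2)"
      by (simp add: sum_distrib_left)
    also have "\<dots> = (1 / real n) * (\<Sum>i<n. \<Sum>u\<in>(Basis :: (real^'m^'d) set). (norm (A i *v (u *v xs i)))\<^sup>2)"
      by (subst sum.swap) (rule refl)
    also have "\<dots> = (1 / real n) * (\<Sum>i<n. s i)"
      by (simp add: basis_sum_jac s_def)
    finally show ?thesis .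
  qed
  define F where "F i = frob_norm (input_jac (net g) \<theta>s (xs i))" for i
  define c where "c i = spec_norm W ^ 2 / norm (xs i) ^ 2" for i
  have Fcs: "(F i)\<^sup>2 \<le> c i * s i" if i: "i < n" for i
  proof -
    have "F i \<le> frob_norm (A i) * spec_norm W" unfolding F_def Jf by (rule frob_mult_bound)
    then have "(F i)\<^sup>2 \<le> (frob_norm (A i) * spec_norm W)\<^sup>2"
      by (rule power_mono) (simp add: F_def frob_nonneg)
    also have "\<dots> = c i * s i"
      using nonzero[OF i] by (simp add: c_def s_def power_mult_distrib field_simps)
    finally show ?thesis .
  qed
  have F0: "F i \<ge> 0" for i unfolding F_def by (rule frob_nonneg)
  have c0: "c i \<ge> 0" for i unfolding c_def by simp
  have s0: "s i \<ge> 0" for i unfolding s_def by simp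
  have cN: "c i ^ ?N = spec_norm (fst \<theta>s) ^ (2 * ?N) / norm (xs i) ^ (2 * ?N)" for i
    unfolding c_def W_def by (simp add: power_divide power_mult)
  have Npos: "?N > 0" by simp
  show ?thesis
  proof (cases "n = 0")
    case True
    then show ?thesis by (simp add: LVR_def)
  next
    case False
    then have npos: "real n > 0" by simp
    define T where "T = real n * sharpness (net g) xs ys n \<theta>s"
    have sT: "(\<Sum>i<n. s i) \<le> T"
      using Sge npos unfolding T_def by (simp add: field_simps)
    have T0: "T \<ge> 0" using sT sum_nonneg[of "{..<n}" s] s0 by force
    have comb: "(\<Sum>i<n. F i ^ ?N) \<le> sqrt (\<Sum>i<n. c i ^ ?N) * sqrt (T ^ ?N)"
      by (rule combine[OF F0 c0 s0 Fcs sT Npos])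
    have np: "real ?N powr (- real ?N / 2) = 1 / sqrt (real ?N ^ ?N)" by (rule npow_eq[OF Npos])
    have Tp: "(T / real ?N) powr (real ?N / 2) = sqrt (T ^ ?N) / sqrt (real ?N ^ ?N)"
      using powr_half_nat[of "T / real ?N" ?N] T0 by (simp add: power_divide real_sqrt_divide)
    have part1: "LVR (net g) \<theta>s xs n \<le> real ?N powr (- real ?N / 2) / real n * (\<Sum>i<n. F i ^ ?N)"
    proof -
      have "(\<Sum>i<n. local_vol (input_jac (net g) \<theta>s (xs i))) \<le> (\<Sum>i<n. real ?N powr (- real ?N / 2) * F i ^ ?N)"
        unfolding F_def by (rule sum_mono) (rule local_vol_bound)
      also have "\<dots> = real ?N powr (- real ?N / 2) * (\<Sum>i<n. F i ^ ?N)"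
        by (rule sum_distrib_left[symmetric])
      finally have L: "(\<Sum>i<n. local_vol (input_jac (net g) \<theta>s (xs i))) \<le> real ?N powr (- real ?N / 2) * (\<Sum>i<n. F i ^ ?N)" .
      have "LVR (net g) \<theta>s xs n \<le> (1 / real n) * (real ?N powr (- real ?N / 2) * (\<Sum>i<n. F i ^ ?N))"
        unfolding LVR_def by (rule mult_left_mono[OF L]) simp
      then show ?thesis by simp
    qed
    have part2: "real ?N powr (- real ?N / 2) / real n * (\<Sum>i<n. F i ^ ?N)
        \<le> (1 / real n) * sqrt (\<Sum>i<n. c i ^ ?N) * (T / real ?N) powr (real ?N / 2)"
    proof -
      have "real ?N powr (- real ?N / 2) / real n * (\<Sum>i<n. F i ^ ?N)
          = (1 / real n) * (\<Sum>i<n. F i ^ ?N) / sqrt (real ?N ^ ?N)"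
        unfolding np by simp
      also have "\<dots> \<le> (1 / real n) * (sqrt (\<Sum>i<n. c i ^ ?N) * sqrt (T ^ ?N)) / sqrt (real ?N ^ ?N)"
        using comb npos by (simp add: divide_right_mono)
      also have "\<dots> = (1 / real n) * sqrt (\<Sum>i<n. c i ^ ?N) * (T / real ?N) powr (real ?N / 2)"
        unfolding Tp by simp
      finally show ?thesis .
    qed
    show ?thesis
      using part1 part2 unfolding F_def T_def cN by simp
  qed
qed

end
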